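(* Let $n\ge 2$ and let $G$ be a complete $n$-partite graph whose vertex set is partitioned into partite sets $V_1,\dots,V_n$ with $a_i=|V_i|\ge 1$ for each $i$. Then $$\tau(G)=\frac12\left[\left(\sum_{i=1}^n a_i\right)^2-\sum_{i=1}^n a_i^2\right],$$ and for $v\in V_j$, $TDV(v)=\left(\sum_{i=1}^n a_i\right)-a_j$.
   Context: A set $D \subseteq V(G)$ is a total dominating set of $G$ if every vertex of $G$ has a neighbor in $D$. $\gamma_t(G)$ is the minimum cardinality of a total dominating set; a minimum one is a $\gamma_t(G)$-set. $\tau(G)$ is the number of $\gamma_t(G)$-sets and $TDV(v)$ is the number of $\gamma_t(G)$-sets containing $v$. *)

theory Defs
  imports Complex_Main
begin

text \<open>A simple graph is given by a vertex set V and an adjacency relation E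
  (symmetric, irreflexive, on V).\<close>

definition total_dominating :: "'a set \<Rightarrow> ('a \<Rightarrow> 'a \<Rightarrow> bool) \<Rightarrow> 'a set \<Rightarrow> bool" where
  "total_dominating V E D \<longleftrightarrow> D \<subseteq> V \<and> (\<forall>v\<in>V. \<exists>u\<in>D. E v u)"

definition gamma_t :: "'a set \<Rightarrow> ('a \<Rightarrow> 'a \<Rightarrow> bool) \<Rightarrow> nat" where
  "gamma_t V E = (LEAST k. \<exists>D. total_dominating V E D \<and> finite D \<and> card D = k)"

definition gamma_t_sets :: "'a set \<Rightarrow> ('a \<Rightarrow> 'a \<Rightarrow> bool) \<Rightarrow> 'a set set" where
  "gamma_t_sets V E = {D. total_dominating V E D \<and> finite D \<and> card D = gamma_t V E}"

definition tau :: "'a set \<Rightarrow> ('a \<Rightarrow> 'a \<Rightarrow> bool) \<Rightarrow> nat" where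
  "tau V E = card (gamma_t_sets V E)"

definition TDV :: "'a set \<Rightarrow> ('a \<Rightarrow> 'a \<Rightarrow> bool) \<Rightarrow> 'a \<Rightarrow> nat" where
  "TDV V E v = card {D \<in> gamma_t_sets V E. v \<in> D}"

definition complete_multipartite ::
  "'a set \<Rightarrow> ('a \<Rightarrow> 'a \<Rightarrow> bool) \<Rightarrow> nat \<Rightarrow> (nat \<Rightarrow> 'a set) \<Rightarrow> bool" where
  "complete_multipartite V E n P \<longleftrightarrow>
     V = (\<Union>i<n. P i) \<and>
     (\<forall>i<n. \<forall>j<n. i \<noteq> j \<longrightarrow> P i \<inter> P j = {}) \<and>
     (\<forall>u v. E u v \<longleftrightarrow> u \<in> V \<and> v \<in> V \<and> \<not> (\<exists>i<n. u \<in> P i \<and> v \<in> P i))"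

end

theory Submission
  imports Defs
begin

theorem proposition3p1:
  fixes V :: "'a set" and E :: "'a \<Rightarrow> 'a \<Rightarrow> bool" and n :: nat and P :: "nat \<Rightarrow> 'a set"
  assumes "n \<ge> 2"
    and "complete_multipartite V E n P"
    and "\<forall>i<n. finite (P i) \<and> card (P i) \<ge> 1"
  shows "real (tau V E) = (1/2) * ((\<Sum>i<n. real (card (P i)))^2 - (\<Sum>i<n. real (card (P i))^2)) \<and>
         (\<forall>j<n. \<forall>v\<in>P j. TDV V E v = (\<Sum>i<n. card (P i)) - card (P j))"
proof -
  define same where "same x y \<longleftrightarrow> (\<exists>i<n. x \<in> P i \<and> y \<in> P i)" for x y
  have VU: "V = (\<Union>i<n. P i)" and disj: "\<And>i j. i<n \<Longrightarrow> j<n \<Longrightarrow> i \<noteq> j \<Longrightarrow> P i \<inter> P j = {}"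
    and Edef: "\<And>u v. E u v \<longleftrightarrow> u \<in> V \<and> v \<in> V \<and> \<not> same u v"
    using assms(2) unfolding complete_multipartite_def same_def by auto
  have fin: "\<And>i. i<n \<Longrightarrow> finite (P i)" and ne: "\<And>i. i<n \<Longrightarrow> P i \<noteq> {}"
    using assms(3) by auto
  have finV: "finite V" using VU fin by auto
  have sameP: "\<And>x y j. j<n \<Longrightarrow> x \<in> P j \<Longrightarrow> same x y \<longleftrightarrow> y \<in> P j"
    unfolding same_def using disj by blast
  have inV: "\<And>x. x \<in> V \<Longrightarrow> \<exists>j<n. x \<in> P j" using VU by auto
  have selfsame: "\<And>x. x \<in> V \<Longrightarrow> same x x" using inV same_def by blast
  have cardV: "card V = (\<Sum>i<n. card (P i))"
    unfolding VU by (rule card_UN_disjoint) (use fin disj in auto)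
  have td2: "\<And>u w. u \<in> V \<Longrightarrow> w \<in> V \<Longrightarrow> \<not> same u w \<Longrightarrow> total_dominating V E {u,w}"
  proof -
    fix u w assume u: "u \<in> V" and w: "w \<in> V" and nsw: "\<not> same u w"
    show "total_dominating V E {u,w}" unfolding total_dominating_def
    proof (intro conjI ballI)
      show "{u,w} \<subseteq> V" using u w by auto
      fix v assume v: "v \<in> V"
      then obtain k where k: "k<n" "v \<in> P k" using inV by blast
      show "\<exists>x\<in>{u,w}. E v x"
      proof (cases "same v w")
        case False then show ?thesis using Edef v w by auto
      next
        case True
        then have "w \<in> P k" using sameP k by blast
        then have "u \<notin> P k" using nsw k unfolding same_def by blast
        then have "\<not> same v u" using sameP[OF k] by blast
        then show ?thesis using Edef v u by auto
      qed
    qed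
  qed
  have geq2: "\<And>D. total_dominating V E D \<Longrightarrow> finite D \<Longrightarrow> \<exists>u w. u \<in> D \<and> w \<in> D \<and> \<not> same u w \<and> u \<in> V \<and> w \<in> V"
  proof -
    fix D assume td: "total_dominating V E D"
    obtain x where x: "x \<in> P 0" using ne assms(1) by fastforce
    have "x \<in> V" using VU x assms(1) by auto
    then obtain u where "u \<in> D" "E x u" using td unfolding total_dominating_def by blast
    then have "u \<in> V" using Edef by auto
    then obtain w where "w \<in> D" "E u w" using td unfolding total_dominating_def by blast
    moreover have "w \<in> V" "\<not> same u w" using \<open>E u w\<close> Edef[of u w] by simp_all
    ultimately show "\<exists>u w. u \<in> D \<and> w \<in> D \<and> \<not> same u w \<and> u \<in> V \<and> w \<in> V"
      using \<open>u \<in> D\<close> \<open>u \<in> V\<close> by blast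
  qed
  obtain x0 where x0: "x0 \<in> P 0" using ne assms(1) by fastforce
  obtain x1 where x1: "x1 \<in> P 1" using ne assms(1) by fastforce
  have x0V: "x0 \<in> V" and x1V: "x1 \<in> V" using VU x0 x1 assms(1) by auto
  have "\<not> same x0 x1" using sameP[of 0 x0 x1] x0 x1 disj[of 0 1] assms(1) by auto
  then have ne01: "x0 \<noteq> x1" using selfsame x0V by blast
  have gt: "gamma_t V E = 2"
    unfolding gamma_t_def
  proof (rule Least_equality)
    show "\<exists>D. total_dominating V E D \<and> finite D \<and> card D = 2"
      using td2[OF x0V x1V \<open>\<not> same x0 x1\<close>] ne01 by (intro exI[of _ "{x0,x1}"]) auto
  next
    fix k assume "\<exists>D. total_dominating V E D \<and> finite D \<and> card D = k"
    then obtain D where D: "total_dominating V E D" "finite D" "card D = k" by blast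
    then obtain u w where uw: "u \<in> D" "w \<in> D" "\<not> same u w" "u \<in> V" by (meson geq2)
    then have "u \<noteq> w" using selfsame by blast
    then have "card {u,w} \<le> card D" using uw D(2) by (intro card_mono) auto
    then show "2 \<le> k" using \<open>u \<noteq> w\<close> D by auto
  qed
  define S where "S = gamma_t_sets V E"
  have Schar: "\<And>D. D \<in> S \<longleftrightarrow> (\<exists>u w. D = {u,w} \<and> u \<in> V \<and> w \<in> V \<and> \<not> same u w)"
  proof
    fix D assume "D \<in> S"
    then have D: "total_dominating V E D" "finite D" "card D = 2"
      unfolding S_def gamma_t_sets_def gt by auto
    then obtain u w where uw: "u \<in> D" "w \<in> D" "\<not> same u w" "u \<in> V" "w \<in> V" by (meson geq2)
    then have "u \<noteq> w" using selfsame by blast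
    have "{u,w} \<subseteq> D" using uw by auto
    moreover have "card {u,w} = card D" using \<open>u \<noteq> w\<close> D by auto
    ultimately have "{u,w} = D" using D(2) by (metis card_subset_eq)
    then show "\<exists>u w. D = {u,w} \<and> u \<in> V \<and> w \<in> V \<and> \<not> same u w" using uw by blast
  next
    fix D assume "\<exists>u w. D = {u,w} \<and> u \<in> V \<and> w \<in> V \<and> \<not> same u w"
    then obtain u w where uw: "D = {u,w}" "u \<in> V" "w \<in> V" "\<not> same u w" by blast
    then have "u \<noteq> w" using selfsame by blast
    then show "D \<in> S" unfolding S_def gamma_t_sets_def gt using td2 uw by auto
  qed
  have TDVeq: "\<And>j v. j<n \<Longrightarrow> v \<in> P j \<Longrightarrow> TDV V E v = card V - card (P j)"
  proof -
    fix j v assume j: "j<n" and v: "v \<in> P j"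
    have vV: "v \<in> V" using VU j v by auto
    have eq: "{D \<in> S. v \<in> D} = (\<lambda>w. {v,w}) ` (V - P j)"
    proof (rule set_eqI, rule iffI)
      fix D assume "D \<in> {D \<in> S. v \<in> D}"
      then obtain u w where uw: "D = {u,w}" "u \<in> V" "w \<in> V" "\<not> same u w" "v \<in> D"
        using Schar[of D] by blast
      show "D \<in> (\<lambda>w. {v,w}) ` (V - P j)"
      proof (cases "v = u")
        case True
        then have "w \<notin> P j" using sameP[OF j v] uw by blast
        then show ?thesis using uw True by auto
      next
        case False
        then have "v = w" using uw by auto
        then have "u \<notin> P j" using v uw j unfolding same_def by blast
        then show ?thesis using uw \<open>v = w\<close> by (intro image_eqI[of _ _ u]) auto
      qed
    next
      fix D assume "D \<in> (\<lambda>w. {v,w}) ` (V - P j)"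
      then obtain w where w: "D = {v,w}" "w \<in> V" "w \<notin> P j" by blast
      then have "\<not> same v w" using sameP[OF j v] by blast
      then have "D \<in> S" using Schar[of D] w vV by blast
      then show "D \<in> {D \<in> S. v \<in> D}" using w by simp
    qed
    have inj: "inj_on (\<lambda>w. {v,w}) (V - P j)"
      using v by (auto simp: inj_on_def doubleton_eq_iff)
    have "TDV V E v = card (V - P j)"
      unfolding TDV_def S_def[symmetric] eq using card_image[OF inj] by simp
    also have "\<dots> = card V - card (P j)"
      using VU j fin by (subst card_Diff_subset) auto
    finally show "TDV V E v = card V - card (P j)" .
  qed
  have "S \<subseteq> Pow V"
  proof
    fix D assume "D \<in> S"
    then obtain u w where uw: "D = {u,w}" "u \<in> V" "w \<in> V" using Schar[of D] by blast
    then show "D \<in> Pow V" by simp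
  qed
  then have finS: "finite S" using finV finite_subset by blast
  have c2: "\<And>D. D \<in> S \<Longrightarrow> card (D \<inter> V) = 2"
  proof -
    fix D assume "D \<in> S"
    then obtain u w where uw: "D = {u,w}" "u \<in> V" "w \<in> V" "\<not> same u w" using Schar[of D] by blast
    then have "u \<noteq> w" using selfsame by blast
    then show "card (D \<inter> V) = 2" using uw by auto
  qed
  have "(\<Sum>v\<in>V. TDV V E v) = (\<Sum>v\<in>V. \<Sum>D\<in>S. if v \<in> D then 1 else (0::nat))"
    unfolding TDV_def S_def[symmetric] using finS by (simp add: sum.If_cases Int_def)
  also have "\<dots> = (\<Sum>D\<in>S. \<Sum>v\<in>V. if v \<in> D then 1 else (0::nat))" by (rule sum.swap)
  also have "\<dots> = (\<Sum>D\<in>S. card (D \<inter> V))"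
    using finV by (simp add: sum.If_cases Int_commute)
  also have "\<dots> = (\<Sum>D\<in>S. 2)" using c2 by simp
  finally have dc: "(\<Sum>v\<in>V. TDV V E v) = 2 * card S" by simp
  have "(\<Sum>v\<in>V. TDV V E v) = (\<Sum>j<n. \<Sum>v\<in>P j. TDV V E v)"
    unfolding VU by (rule sum.UNION_disjoint) (use fin disj in auto)
  also have "\<dots> = (\<Sum>j<n. card (P j) * (card V - card (P j)))"
    using TDVeq by simp
  finally have dc2: "2 * card S = (\<Sum>j<n. card (P j) * (card V - card (P j)))" using dc by simp
  have le: "\<And>j. j<n \<Longrightarrow> card (P j) \<le> card V"
    using VU finV by (intro card_mono) auto
  have "real (2 * card S) = (\<Sum>j<n. real (card (P j)) * (real (card V) - real (card (P j))))"
    unfolding dc2 of_nat_sum using le by (intro sum.cong) (auto simp: of_nat_diff)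
  also have "\<dots> = real (card V) * (\<Sum>j<n. real (card (P j))) - (\<Sum>j<n. real (card (P j))^2)"
    by (simp add: sum_distrib_left algebra_simps power2_eq_square sum_subtractf)
  also have "\<dots> = (\<Sum>i<n. real (card (P i)))^2 - (\<Sum>i<n. real (card (P i))^2)"
    unfolding cardV of_nat_sum by (simp add: power2_eq_square)
  finally have "real (tau V E) = (1/2) * ((\<Sum>i<n. real (card (P i)))^2 - (\<Sum>i<n. real (card (P i))^2))"
    unfolding tau_def S_def[symmetric] by simp
  moreover have "\<forall>j<n. \<forall>v\<in>P j. TDV V E v = (\<Sum>i<n. card (P i)) - card (P j)"
    using TDVeq cardV by simp
  ultimately show ?thesis by blast
qed

end
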